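(* Let $S$ be a semigroup and $a_1,a_2,\dotsc$ a bijective (injective) sequence in $S$ that has no proper sumsequence. Let $A_\infty:=\bigcap_{n=1}^{\infty}\mathrm{FS}(a_n,a_{n+1},\dotsc)$. Then: (1) for each $s\in A_\infty$ and each $n$, there is a nonempty finite index set $F$ with $\min F\ge n$ and $s=a_F$; (2) $A_\infty$ is a (nonempty) subsemigroup of $S$; (3) every sequence $b_1,b_2,\dotsc$ of elements of $A_\infty$ is a sumsequence of $a_1,a_2,\dotsc$.
   Context: Semigroups are written additively and are not assumed commutative. For a sequence $a_1,a_2,\dotsc$ and a finite nonempty index set $F=\{i_1<\dotsb<i_m\}\subseteq\mathbb N$, let $a_F:=a_{i_1}+\dotsb+a_{i_m}$; write $F_1<F_2$ if every element of $F_1$ is smaller than every element of $F_2$. A sumsequence of $a_1,a_2,\dotsc$ is a sequence $a_{F_1},a_{F_2},\dotsc$ for some sequence $F_1<F_2<\dotsb$ of nonempty finite index sets. A sequence is proper if $a_{F_1}\ne a_{F_2}$ for all nonempty finite $F_1<F_2$. $\mathrm{FS}(a_n,a_{n+1},\dotsc)$ is the set of all $a_F$ with $F$ nonempty finite and $\min F\ge n$. *)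

theory Defs
  imports Main
begin

fun lsum :: "'a::semigroup_add list \<Rightarrow> 'a" where
  "lsum [] = undefined"
| "lsum [x] = x"
| "lsum (x # y # xs) = x + lsum (y # xs)"

definition idxsum :: "(nat \<Rightarrow> 'a::semigroup_add) \<Rightarrow> nat set \<Rightarrow> 'a" where
  "idxsum a F = lsum (map a (sorted_list_of_set F))"

definition set_less :: "nat set \<Rightarrow> nat set \<Rightarrow> bool" where
  "set_less F G \<longleftrightarrow> (\<forall>x\<in>F. \<forall>y\<in>G. x < y)"

definition fin_ne :: "nat set \<Rightarrow> bool" where
  "fin_ne F \<longleftrightarrow> finite F \<and> F \<noteq> {}"

definition is_sumseq :: "(nat \<Rightarrow> 'a::semigroup_add) \<Rightarrow> (nat \<Rightarrow> 'a) \<Rightarrow> bool" where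
  "is_sumseq a b \<longleftrightarrow> (\<exists>F :: nat \<Rightarrow> nat set.
      (\<forall>i. fin_ne (F i)) \<and> (\<forall>i. set_less (F i) (F (Suc i))) \<and> (\<forall>i. b i = idxsum a (F i)))"

definition proper :: "(nat \<Rightarrow> 'a::semigroup_add) \<Rightarrow> bool" where
  "proper a \<longleftrightarrow> (\<forall>F1 F2. fin_ne F1 \<and> fin_ne F2 \<and> set_less F1 F2 \<longrightarrow> idxsum a F1 \<noteq> idxsum a F2)"

definition FS :: "(nat \<Rightarrow> 'a::semigroup_add) \<Rightarrow> nat \<Rightarrow> 'a set" where
  "FS a n = {idxsum a F | F. fin_ne F \<and> n \<le> Min F}"

end

theory Submission
  imports Defs
begin

lemma lsum_append: "xs \<noteq> [] \<Longrightarrow> ys \<noteq> [] \<Longrightarrow> lsum (xs @ ys) = lsum xs + lsum ys"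
proof (induction xs rule: lsum.induct)
  case 1 then show ?case by simp
next
  case (2 x) then show ?case by (cases ys) auto
next
  case (3 x y xs) then show ?case by (simp add: add.assoc)
qed

lemma idxsum_single: "idxsum a {x} = a x"
  by (simp add: idxsum_def)

lemma sorted_union:
  assumes "finite F" "finite G" "set_less F G"
  shows "sorted_list_of_set (F \<union> G) = sorted_list_of_set F @ sorted_list_of_set G"
proof -
  have d: "F \<inter> G = {}" using assms(3) by (auto simp: set_less_def)
  show ?thesis
    using assms d
    by (subst sorted_list_of_set_unique[symmetric])
       (auto simp: sorted_wrt_append set_less_def card_Un_disjoint)
qed

lemma idxsum_union:
  assumes "fin_ne F" "fin_ne G" "set_less F G"
  shows "idxsum a (F \<union> G) = idxsum a F + idxsum a G"
  using assms unfolding idxsum_def fin_ne_def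
  by (simp add: sorted_union lsum_append)

lemma sorted_image:
  assumes "strict_mono m" "finite G"
  shows "sorted_list_of_set (m ` G) = map m (sorted_list_of_set G)"
proof -
  have inj: "inj m" using assms(1) strict_mono_imp_inj_on by blast
  have "sorted_wrt (<) (map m (sorted_list_of_set G))"
    using assms sorted_list_of_set.sorted_key_list_of_set_unique
    by (auto simp: sorted_wrt_map strict_mono_less intro: sorted_wrt_mono_rel[of _ "(<)"])
  then show ?thesis using assms inj
    by (subst sorted_list_of_set_unique[symmetric]) (auto simp: card_image inj_on_subset)
qed

lemma idxsum_comp:
  assumes "strict_mono m" "finite G"
  shows "idxsum (a \<circ> m) G = idxsum a (m ` G)"
  using assms by (simp add: idxsum_def sorted_image)

lemma part1:
  assumes "s \<in> (\<Inter>n. FS a n)"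
  shows "\<exists>F. fin_ne F \<and> n \<le> Min F \<and> s = idxsum a F"
  using assms by (auto simp: FS_def)

lemma closure:
  assumes x: "x \<in> (\<Inter>n. FS a n)" and y: "y \<in> (\<Inter>n. FS a n)"
  shows "x + y \<in> (\<Inter>n. FS a n)"
proof
  fix n
  obtain F where F: "fin_ne F" "n \<le> Min F" "x = idxsum a F" using part1[OF x] by blast
  obtain G where G: "fin_ne G" "Suc (Max F) \<le> Min G" "y = idxsum a G" using part1[OF y] by blast
  have sl: "set_less F G"
    unfolding set_less_def
  proof (intro ballI)
    fix u v assume "u \<in> F" "v \<in> G"
    then have "u \<le> Max F" "Min G \<le> v" using F(1) G(1) by (auto simp: fin_ne_def)
    then show "u < v" using G(2) by linarith
  qed
  have "x + y = idxsum a (F \<union> G)" using idxsum_union[OF F(1) G(1) sl, of a] F(3) G(3) by simp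
  moreover have "fin_ne (F \<union> G)" using F(1) G(1) by (auto simp: fin_ne_def)
  moreover have "n \<le> Min (F \<union> G)"
  proof -
    have fF: "finite F" "F \<noteq> {}" and fG: "finite G" "G \<noteq> {}" using F(1) G(1) by (auto simp: fin_ne_def)
    have e: "Min (F \<union> G) = min (Min F) (Min G)" using Min_Un[OF fF fG] .
    have "Min F \<le> Max F" using fF Min_in[OF fF] Max_ge[OF fF(1)] by blast
    then show ?thesis using e F(2) G(2) by linarith
  qed
  ultimately show "x + y \<in> FS a n" unfolding FS_def by blast
qed

lemma part3:
  assumes "range b \<subseteq> (\<Inter>n. FS a n)"
  shows "is_sumseq a b"
proof -
  define pick where "pick i n = (SOME F. fin_ne F \<and> n \<le> Min F \<and> b i = idxsum a F)" for i n
  have pk: "fin_ne (pick i n) \<and> n \<le> Min (pick i n) \<and> b i = idxsum a (pick i n)" for i n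
  proof -
    have "b i \<in> (\<Inter>n. FS a n)" using assms by auto
    from part1[OF this, of n] show ?thesis unfolding pick_def by (rule someI_ex)
  qed
  define F where "F = rec_nat (pick 0 0) (\<lambda>i Fi. pick (Suc i) (Suc (Max Fi)))"
  have F0: "F 0 = pick 0 0" and FS: "F (Suc i) = pick (Suc i) (Suc (Max (F i)))" for i
    by (simp_all add: F_def)
  have ne: "fin_ne (F i)" for i by (cases i) (simp_all add: F0 FS pk)
  have bi: "b i = idxsum a (F i)" for i by (cases i) (simp_all add: F0 FS pk)
  have sl: "set_less (F i) (F (Suc i))" for i
  proof -
    have M: "Suc (Max (F i)) \<le> Min (F (Suc i))" using pk FS by metis
    have f: "fin_ne (F (Suc i))" "fin_ne (F i)" using ne by auto
    show ?thesis unfolding set_less_def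
    proof (intro ballI)
      fix u v assume "u \<in> F i" "v \<in> F (Suc i)"
      with f have "u \<le> Max (F i)" "Min (F (Suc i)) \<le> v" by (auto simp: fin_ne_def)
      then show "u < v" using \<open>Suc (Max (F i)) \<le> Min (F (Suc i))\<close> by linarith
    qed
  qed
  show ?thesis unfolding is_sumseq_def using ne sl bi by blast
qed

lemma nonempty:
  fixes a :: "nat \<Rightarrow> 'a::semigroup_add"
  assumes "\<not> (\<exists>b. is_sumseq a b \<and> proper b)"
  shows "(\<Inter>n. FS a n) \<noteq> {}"
proof
  assume E: "(\<Inter>n. FS a n) = {}"
  define N where "N s = (SOME n. s \<notin> FS a n)" for s
  have Nn: "s \<notin> FS a (N s)" for s
  proof -
    have "\<exists>n. s \<notin> FS a n" using E by auto
    then show ?thesis unfolding N_def by (rule someI_ex)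
  qed
  define g where "g j = Suc j + Max ((\<lambda>H. N (idxsum a H)) ` (Pow {..j} - {{}}))" for j
  define m where "m k = (g ^^ k) 0" for k
  have mS: "m (Suc k) = g (m k)" for k by (simp add: m_def)
  have sm: "strict_mono m" unfolding strict_mono_Suc_iff mS g_def by simp
  define b where "b = a \<circ> m"
  have "is_sumseq a b"
    unfolding is_sumseq_def
    by (rule exI[of _ "\<lambda>i. {m i}"])
       (auto simp: fin_ne_def set_less_def b_def idxsum_single strict_mono_less[OF sm])
  moreover have "proper b"
    unfolding proper_def
  proof (intro allI impI)
    fix G1 G2 assume h: "fin_ne G1 \<and> fin_ne G2 \<and> set_less G1 G2"
    define k where "k = Max G1"
    define s where "s = idxsum a (m ` G1)"
    have b1: "idxsum b G1 = s" using h sm by (simp add: b_def s_def idxsum_comp fin_ne_def)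
    have b2: "idxsum b G2 = idxsum a (m ` G2)" using h sm by (simp add: b_def idxsum_comp fin_ne_def)
    have sub: "m ` G1 \<in> Pow {..m k} - {{}}"
    proof -
      have "\<forall>j\<in>G1. j \<le> k" using h unfolding k_def fin_ne_def by simp
      then have "m ` G1 \<subseteq> {..m k}" using sm by (auto simp: strict_mono_less_eq)
      moreover have "m ` G1 \<noteq> {}" using h by (simp add: fin_ne_def)
      ultimately show ?thesis by simp
    qed
    have fin: "finite (Pow {..m k} - {{}})" by simp
    have "N s \<le> Max ((\<lambda>H. N (idxsum a H)) ` (Pow {..m k} - {{}}))"
      using sub fin unfolding s_def by (intro Max_ge) auto
    then have Ns: "N s < m (Suc k)" by (simp add: mS g_def)
    have kin: "k \<in> G1" using h unfolding k_def fin_ne_def by simp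
    have "\<forall>j\<in>G2. Suc k \<le> j" using h kin unfolding set_less_def by (simp add: Suc_le_eq)
    have "\<forall>x\<in>m ` G2. N s \<le> x"
    proof
      fix x assume "x \<in> m ` G2"
      then obtain j where "j \<in> G2" "x = m j" by blast
      then have "m (Suc k) \<le> x" using \<open>\<forall>j\<in>G2. Suc k \<le> j\<close> sm by (simp add: strict_mono_less_eq)
      then show "N s \<le> x" using Ns by linarith
    qed
    then have "N s \<le> Min (m ` G2)" using h by (auto simp: fin_ne_def)
    moreover have "fin_ne (m ` G2)" using h by (auto simp: fin_ne_def)
    ultimately have "idxsum a (m ` G2) \<in> FS a (N s)" unfolding FS_def by blast
    with Nn[of s] show "idxsum b G1 \<noteq> idxsum b G2" using b1 b2 by auto
  qed
  ultimately show False using assms by blast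
qed

theorem lemma2p4:
  fixes a :: "nat \<Rightarrow> 'a::semigroup_add"
  assumes "inj a"
    and "\<not> (\<exists>b. is_sumseq a b \<and> proper b)"
  defines "A_inf \<equiv> (\<Inter>n. FS a n)"
  shows "(\<forall>s\<in>A_inf. \<forall>n. \<exists>F. fin_ne F \<and> n \<le> Min F \<and> s = idxsum a F)
    \<and> (A_inf \<noteq> {} \<and> (\<forall>x\<in>A_inf. \<forall>y\<in>A_inf. x + y \<in> A_inf))
    \<and> (\<forall>b. range b \<subseteq> A_inf \<longrightarrow> is_sumseq a b)"
  unfolding A_inf_def
  apply (intro conjI)
     apply (metis part1)
    apply (rule nonempty[OF assms(2)])
   apply (metis closure)
  apply (metis part3)
  done

end
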